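(* Let $G_1$ be a group, $n,m\ge0$, $G\le G_1^n$ a subgroup, $w(\bar x,\bar y)$ a group word in the variables $\bar x=(x_1,\dots,x_n)$, $\bar y=(y_1,\dots,y_m)$ and their inverses, and $\bar g\in G_1^m$, $c\in G_1$. If the set $\{\bar h\in G:w(\bar h,\bar g)=c\}$ is $2$-large in $G$, then $w(\bar h,\bar 1)=1$ for all $\bar h\in G\cap Z(G_1)^n$, where $\bar 1=(1,\dots,1)\in G_1^m$.
   Context: A subset $X\subseteq G$ is $2$-large in $G$ if $\bar aX\cap\bar bX\ne\emptyset$ for all $\bar a,\bar b\in G$. *)

theory Defs
  imports "HOL-Algebra.Product_Groups"
begin

text \<open>A group word: a list of letters. A letter is a variable (Inl i = x_i, Inr j = y_j)
  together with a flag saying whether it is inverted (True = inverse).\<close>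
type_synonym word = "((nat + nat) \<times> bool) list"

definition word_vars_ok :: "nat \<Rightarrow> nat \<Rightarrow> word \<Rightarrow> bool" where
  "word_vars_ok n m w \<longleftrightarrow>
     (\<forall>l\<in>set w. case fst l of Inl i \<Rightarrow> i < n | Inr j \<Rightarrow> j < m)"

definition eval_letter :: "('g, 'z) monoid_scheme \<Rightarrow> (nat \<Rightarrow> 'g) \<Rightarrow> (nat \<Rightarrow> 'g)
    \<Rightarrow> (nat + nat) \<times> bool \<Rightarrow> 'g" where
  "eval_letter G1 xs ys l =
     (let v = (case fst l of Inl i \<Rightarrow> xs i | Inr j \<Rightarrow> ys j)
      in if snd l then inv\<^bsub>G1\<^esub> v else v)"

definition eval_word :: "('g, 'z) monoid_scheme \<Rightarrow> word \<Rightarrow> (nat \<Rightarrow> 'g) \<Rightarrow> (nat \<Rightarrow> 'g) \<Rightarrow> 'g" where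
  "eval_word G1 w xs ys = foldr (\<lambda>l acc. eval_letter G1 xs ys l \<otimes>\<^bsub>G1\<^esub> acc) w \<one>\<^bsub>G1\<^esub>"

definition group_center :: "('g, 'z) monoid_scheme \<Rightarrow> 'g set" where
  "group_center G1 = {z \<in> carrier G1. \<forall>x\<in>carrier G1. z \<otimes>\<^bsub>G1\<^esub> x = x \<otimes>\<^bsub>G1\<^esub> z}"

definition two_large :: "('g, 'z) monoid_scheme \<Rightarrow> 'g set \<Rightarrow> 'g set \<Rightarrow> bool" where
  "two_large P H X \<longleftrightarrow>
     (\<forall>a\<in>H. \<forall>b\<in>H. {a \<otimes>\<^bsub>P\<^esub> x | x. x \<in> X} \<inter> {b \<otimes>\<^bsub>P\<^esub> x | x. x \<in> X} \<noteq> {})"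

end

theory Submission
  imports Defs
begin

lemma center_closed:
  assumes G: "group G1" and a: "a \<in> group_center G1" and b: "b \<in> group_center G1"
  shows "a \<otimes>\<^bsub>G1\<^esub> b \<in> group_center G1" "inv\<^bsub>G1\<^esub> a \<in> group_center G1"
    "\<one>\<^bsub>G1\<^esub> \<in> group_center G1"
proof -
  interpret group G1 by (rule G)
  have ac: "a \<in> carrier G1" and acm: "\<And>x. x \<in> carrier G1 \<Longrightarrow> a \<otimes>\<^bsub>G1\<^esub> x = x \<otimes>\<^bsub>G1\<^esub> a"
    using a by (auto simp: group_center_def)
  have bc: "b \<in> carrier G1" and bcm: "\<And>x. x \<in> carrier G1 \<Longrightarrow> b \<otimes>\<^bsub>G1\<^esub> x = x \<otimes>\<^bsub>G1\<^esub> b"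
    using b by (auto simp: group_center_def)
  show "a \<otimes>\<^bsub>G1\<^esub> b \<in> group_center G1"
    unfolding group_center_def
  proof (safe)
    show "a \<otimes>\<^bsub>G1\<^esub> b \<in> carrier G1" using ac bc by simp
    fix x assume x: "x \<in> carrier G1"
    have "a \<otimes>\<^bsub>G1\<^esub> b \<otimes>\<^bsub>G1\<^esub> x = a \<otimes>\<^bsub>G1\<^esub> (x \<otimes>\<^bsub>G1\<^esub> b)"
      using ac bc x bcm[OF x] by (simp add: m_assoc)
    also have "\<dots> = (a \<otimes>\<^bsub>G1\<^esub> x) \<otimes>\<^bsub>G1\<^esub> b" using ac bc x by (simp add: m_assoc)
    also have "\<dots> = x \<otimes>\<^bsub>G1\<^esub> a \<otimes>\<^bsub>G1\<^esub> b" using acm[OF x] by simp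
    finally show "a \<otimes>\<^bsub>G1\<^esub> b \<otimes>\<^bsub>G1\<^esub> x = x \<otimes>\<^bsub>G1\<^esub> (a \<otimes>\<^bsub>G1\<^esub> b)"
      using ac bc x by (simp add: m_assoc)
  qed
  show "\<one>\<^bsub>G1\<^esub> \<in> group_center G1" unfolding group_center_def by auto
  show "inv\<^bsub>G1\<^esub> a \<in> group_center G1"
    unfolding group_center_def
  proof (safe)
    show "inv\<^bsub>G1\<^esub> a \<in> carrier G1" using ac by simp
    fix x assume x: "x \<in> carrier G1"
    have "a \<otimes>\<^bsub>G1\<^esub> (inv\<^bsub>G1\<^esub> a \<otimes>\<^bsub>G1\<^esub> x) = a \<otimes>\<^bsub>G1\<^esub> (x \<otimes>\<^bsub>G1\<^esub> inv\<^bsub>G1\<^esub> a)"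
    proof -
      have "a \<otimes>\<^bsub>G1\<^esub> (inv\<^bsub>G1\<^esub> a \<otimes>\<^bsub>G1\<^esub> x) = x" using ac x by (simp add: m_assoc[symmetric])
      also have "\<dots> = (x \<otimes>\<^bsub>G1\<^esub> a) \<otimes>\<^bsub>G1\<^esub> inv\<^bsub>G1\<^esub> a" using ac x by (simp add: m_assoc)
      also have "\<dots> = a \<otimes>\<^bsub>G1\<^esub> (x \<otimes>\<^bsub>G1\<^esub> inv\<^bsub>G1\<^esub> a)" using ac x acm[OF x, symmetric] by (simp add: m_assoc)
      finally show ?thesis .
    qed
    then show "inv\<^bsub>G1\<^esub> a \<otimes>\<^bsub>G1\<^esub> x = x \<otimes>\<^bsub>G1\<^esub> inv\<^bsub>G1\<^esub> a" using ac x by (metis Units_eq Units_l_cancel inv_closed m_closed)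
  qed
qed

lemma eval_word_Cons: "eval_word G1 (l # w) x y = eval_letter G1 x y l \<otimes>\<^bsub>G1\<^esub> eval_word G1 w x y"
  by (simp add: eval_word_def)

lemma one_center: "group G1 \<Longrightarrow> \<one>\<^bsub>G1\<^esub> \<in> group_center G1"
  by (auto simp: group_center_def group.is_monoid monoid.l_one monoid.r_one monoid.one_closed)

lemma word_center:
  assumes G: "group G1" and ok: "word_vars_ok n m w"
    and z: "\<forall>i<n. z i \<in> group_center G1"
  shows "eval_word G1 w z (\<lambda>j\<in>{..<m}. \<one>\<^bsub>G1\<^esub>) \<in> group_center G1"
  using ok
proof (induction w)
  case Nil
  then show ?case using one_center[OF G] by (simp add: eval_word_def)
next
  case (Cons l w)
  then have okw: "word_vars_ok n m w" and okl: "case fst l of Inl i \<Rightarrow> i < n | Inr j \<Rightarrow> j < m"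
    by (auto simp: word_vars_ok_def)
  have "eval_letter G1 z (\<lambda>j\<in>{..<m}. \<one>\<^bsub>G1\<^esub>) l \<in> group_center G1"
    using okl z center_closed[OF G] one_center[OF G]
    by (cases l) (auto simp: eval_letter_def Let_def split: sum.splits)
  then show ?case using Cons.IH[OF okw] center_closed(1)[OF G]
    by (simp only: eval_word_Cons)
qed

lemma word_carrier:
  assumes G: "group G1" and ok: "word_vars_ok n m w"
    and x: "\<forall>i<n. x i \<in> carrier G1" and g: "\<forall>j<m. g j \<in> carrier G1"
  shows "eval_word G1 w x g \<in> carrier G1"
  using ok
proof (induction w)
  case Nil
  then show ?case using G by (simp add: eval_word_def group.is_monoid monoid.one_closed)
next
  case (Cons l w)
  then have okw: "word_vars_ok n m w" and okl: "case fst l of Inl i \<Rightarrow> i < n | Inr j \<Rightarrow> j < m"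
    by (auto simp: word_vars_ok_def)
  interpret group G1 by (rule G)
  have "eval_letter G1 x g l \<in> carrier G1"
    using okl x g by (cases l) (auto simp: eval_letter_def Let_def split: sum.splits)
  then show ?case using Cons.IH[OF okw] by (simp add: eval_word_def)
qed

lemma word_mult:
  assumes G: "group G1" and ok: "word_vars_ok n m w"
    and z: "\<forall>i<n. z i \<in> group_center G1"
    and x: "\<forall>i<n. x i \<in> carrier G1" and g: "\<forall>j<m. g j \<in> carrier G1"
    and xz: "\<forall>i<n. xz i = z i \<otimes>\<^bsub>G1\<^esub> x i"
  shows "eval_word G1 w xz g = eval_word G1 w z (\<lambda>j\<in>{..<m}. \<one>\<^bsub>G1\<^esub>) \<otimes>\<^bsub>G1\<^esub> eval_word G1 w x g"
  using ok
proof (induction w)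
  case Nil
  then show ?case using G by (simp add: eval_word_def group.is_monoid monoid.one_closed)
next
  case (Cons l w)
  interpret group G1 by (rule G)
  from Cons have okw: "word_vars_ok n m w" and okl: "case fst l of Inl i \<Rightarrow> i < n | Inr j \<Rightarrow> j < m"
    by (auto simp: word_vars_ok_def)
  have zc: "z i \<in> carrier G1" "\<And>y. y \<in> carrier G1 \<Longrightarrow> z i \<otimes>\<^bsub>G1\<^esub> y = y \<otimes>\<^bsub>G1\<^esub> z i" if "i < n" for i
    using z that by (auto simp: group_center_def)
  define A where "A = eval_letter G1 z (\<lambda>j\<in>{..<m}. \<one>\<^bsub>G1\<^esub>) l"
  define B where "B = eval_letter G1 x g l"
  define C where "C = eval_word G1 w z (\<lambda>j\<in>{..<m}. \<one>\<^bsub>G1\<^esub>)"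
  define D where "D = eval_word G1 w x g"
  have Ac: "A \<in> carrier G1"
    using okl zc by (cases l) (auto simp: A_def eval_letter_def Let_def split: sum.splits)
  have Bc: "B \<in> carrier G1"
    using okl x g by (cases l) (auto simp: B_def eval_letter_def Let_def split: sum.splits)
  have Cz: "C \<in> group_center G1" unfolding C_def by (rule word_center[OF G okw z])
  then have Cc: "C \<in> carrier G1" and Ccomm: "\<And>y. y \<in> carrier G1 \<Longrightarrow> C \<otimes>\<^bsub>G1\<^esub> y = y \<otimes>\<^bsub>G1\<^esub> C"
    by (auto simp: group_center_def)
  have Dc: "D \<in> carrier G1" unfolding D_def by (rule word_carrier[OF G okw x g])
  have let_eq: "eval_letter G1 xz g l = A \<otimes>\<^bsub>G1\<^esub> B"
  proof (cases l)
    case (Pair v b)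
    show ?thesis
    proof (cases v)
      case (Inl i)
      then have i: "i < n" using okl Pair by simp
      show ?thesis
      proof (cases b)
        case True
        have "inv\<^bsub>G1\<^esub> (z i \<otimes>\<^bsub>G1\<^esub> x i) = inv\<^bsub>G1\<^esub> (x i) \<otimes>\<^bsub>G1\<^esub> inv\<^bsub>G1\<^esub> (z i)"
          using i zc(1) x by (simp add: inv_mult_group)
        also have "\<dots> = inv\<^bsub>G1\<^esub> (z i) \<otimes>\<^bsub>G1\<^esub> inv\<^bsub>G1\<^esub> (x i)"
        proof -
          have "inv\<^bsub>G1\<^esub> (z i) \<in> group_center G1" using center_closed(2)[OF G z[rule_format, OF i] z[rule_format, OF i]] .
          then have "\<forall>y\<in>carrier G1. inv\<^bsub>G1\<^esub> (z i) \<otimes>\<^bsub>G1\<^esub> y = y \<otimes>\<^bsub>G1\<^esub> inv\<^bsub>G1\<^esub> (z i)"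
            by (simp add: group_center_def)
          moreover have "inv\<^bsub>G1\<^esub> (x i) \<in> carrier G1" using x i by simp
          ultimately show ?thesis by metis
        qed
        finally show ?thesis using Pair Inl True i xz
          by (simp add: A_def B_def eval_letter_def)
      next
        case False
        then show ?thesis using Pair Inl i xz by (simp add: A_def B_def eval_letter_def)
      qed
    next
      case (Inr j)
      then have j: "j < m" using okl Pair by simp
      then show ?thesis using Pair Inr g by (simp add: A_def B_def eval_letter_def Let_def)
    qed
  qed
  have "eval_word G1 (l # w) xz g = (A \<otimes>\<^bsub>G1\<^esub> B) \<otimes>\<^bsub>G1\<^esub> (C \<otimes>\<^bsub>G1\<^esub> D)"
    using Cons.IH[OF okw] let_eq unfolding C_def D_def by (simp only: eval_word_Cons)
  also have "\<dots> = A \<otimes>\<^bsub>G1\<^esub> (C \<otimes>\<^bsub>G1\<^esub> B) \<otimes>\<^bsub>G1\<^esub> D"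
    using Ac Bc Cc Dc Ccomm[OF Bc] by (simp add: m_assoc)
  also have "\<dots> = (A \<otimes>\<^bsub>G1\<^esub> C) \<otimes>\<^bsub>G1\<^esub> (B \<otimes>\<^bsub>G1\<^esub> D)"
    using Ac Bc Cc Dc by (simp add: m_assoc)
  finally show ?case unfolding A_def B_def C_def D_def by (simp only: eval_word_Cons)
qed

theorem theorem3p9:
  fixes G1 :: "('g, 'z) monoid_scheme" and n m :: nat and H :: "(nat \<Rightarrow> 'g) set"
    and w :: word and g :: "nat \<Rightarrow> 'g" and c :: 'g
  assumes "group G1"
    and "subgroup H (product_group {..<n} (\<lambda>_. G1))"
    and "word_vars_ok n m w"
    and "g \<in> carrier (product_group {..<m} (\<lambda>_. G1))"
    and "c \<in> carrier G1"
    and "two_large (product_group {..<n} (\<lambda>_. G1)) H {h \<in> H. eval_word G1 w h g = c}"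
  shows "\<forall>h\<in>H. (\<forall>i<n. h i \<in> group_center G1) \<longrightarrow>
           eval_word G1 w h (\<lambda>j\<in>{..<m}. \<one>\<^bsub>G1\<^esub>) = \<one>\<^bsub>G1\<^esub>"
proof (intro ballI impI)
  fix z assume zH: "z \<in> H" and z: "\<forall>i<n. z i \<in> group_center G1"
  let ?P = "product_group {..<n} (\<lambda>_. G1)"
  interpret G: group G1 by (rule assms(1))
  have Pg: "group ?P" using assms(1) by (simp add: product_group)
  interpret P: group ?P by (rule Pg)
  interpret S: subgroup H ?P by (rule assms(2))
  have oneH: "\<one>\<^bsub>?P\<^esub> \<in> H" by (rule S.one_closed)
  from assms(6) zH oneH obtain x1 x2 where
    x1: "x1 \<in> H" "eval_word G1 w x1 g = c" and x2: "x2 \<in> H" "eval_word G1 w x2 g = c"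
    and eq: "z \<otimes>\<^bsub>?P\<^esub> x1 = \<one>\<^bsub>?P\<^esub> \<otimes>\<^bsub>?P\<^esub> x2"
    unfolding two_large_def by blast
  have x1c: "x1 \<in> carrier ?P" and x2c: "x2 \<in> carrier ?P" using x1 x2 S.subset by auto
  then have eq2: "z \<otimes>\<^bsub>?P\<^esub> x1 = x2" using eq P.l_one[OF x2c] by metis
  have x1i: "\<forall>i<n. x1 i \<in> carrier G1" using x1c by (auto simp: carrier_product_group)
  have gj: "\<forall>j<m. g j \<in> carrier G1" using assms(4) by (auto simp: carrier_product_group)
  have xz: "\<forall>i<n. x2 i = z i \<otimes>\<^bsub>G1\<^esub> x1 i"
    using eq2[symmetric] by (auto simp: product_group_def)
  have "c = eval_word G1 w z (\<lambda>j\<in>{..<m}. \<one>\<^bsub>G1\<^esub>) \<otimes>\<^bsub>G1\<^esub> c"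
    using word_mult[OF assms(1) assms(3) z x1i gj xz] x1 x2 by simp
  moreover have "eval_word G1 w z (\<lambda>j\<in>{..<m}. \<one>\<^bsub>G1\<^esub>) \<in> carrier G1"
    using word_center[OF assms(1) assms(3) z] by (simp add: group_center_def)
  ultimately show "eval_word G1 w z (\<lambda>j\<in>{..<m}. \<one>\<^bsub>G1\<^esub>) = \<one>\<^bsub>G1\<^esub>"
    using assms(5) by (metis G.r_cancel_one)
qed

end
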